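(* Let $f$ be a transformation of a finite set $\Omega$ and let $G$ be a group of permutations of $\Omega$. If there exists $g\in G$ such that $\mathrm{rank}(fgf)=\mathrm{rank}(f)$, then there exists an idempotent $e$ in the semigroup $\langle f,G\rangle$ such that $e$ and $f$ have the same kernel.
   Context: Maps act on $\Omega$ and $fgf$ denotes "apply $f$, then $g$, then $f$". The rank of a map $h$ is $|\Omega h|$; the kernel of $h$ is the partition of $\Omega$ induced by the equivalence relation $\{(x,y): xh=yh\}$. An idempotent is a map $e$ with $e\circ e=e$. *)

theory Defs
  imports Main
begin

text \<open>Maps act on the right: x(fg) = (xf)g, i.e. fg is the HOL function g \<circ> f.
  The ground set Omega is the (finite) universe of the type.\<close>

definition rank :: "('a \<Rightarrow> 'a) \<Rightarrow> nat" where
  "rank h = card (range h)"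

definition kernel :: "('a \<Rightarrow> 'b) \<Rightarrow> 'a set set" where
  "kernel h = {{y. h y = h x} | x. True}"

definition idempotent :: "('a \<Rightarrow> 'a) \<Rightarrow> bool" where
  "idempotent e \<longleftrightarrow> e \<circ> e = e"

definition perm_group :: "('a \<Rightarrow> 'a) set \<Rightarrow> bool" where
  "perm_group G \<longleftrightarrow> id \<in> G \<and> (\<forall>g\<in>G. bij g \<and> inv g \<in> G)
     \<and> (\<forall>g\<in>G. \<forall>h\<in>G. g \<circ> h \<in> G)"

inductive_set gen_semigroup :: "('a \<Rightarrow> 'a) set \<Rightarrow> ('a \<Rightarrow> 'a) set" for S where
  base: "s \<in> S \<Longrightarrow> s \<in> gen_semigroup S"
| comp: "a \<in> gen_semigroup S \<Longrightarrow> b \<in> gen_semigroup S \<Longrightarrow> a \<circ> b \<in> gen_semigroup S"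

end

theory Submission
  imports Defs
begin

lemma pow_in_gen:
  assumes "u \<in> gen_semigroup S"
  shows "u ^^ Suc j \<in> gen_semigroup S"
proof (induction j)
  case 0 then show ?case using assms by simp
next
  case (Suc j)
  have "u ^^ Suc (Suc j) = u \<circ> u ^^ Suc j" by (simp only: funpow.simps)
  show ?case unfolding \<open>u ^^ Suc (Suc j) = u \<circ> u ^^ Suc j\<close>
    by (rule gen_semigroup.comp[OF assms Suc])
qed

lemma pow_inj:
  assumes "inj_on u (range u)"
  shows "inj_on (u ^^ j) (range u) \<and> (u ^^ j) ` range u \<subseteq> range u"
proof (induction j)
  case 0 then show ?case by simp
next
  case (Suc j)
  have i: "inj_on (u \<circ> u ^^ j) (range u)"
    using Suc assms by (meson comp_inj_on inj_on_subset)
  have s: "(u \<circ> u ^^ j) ` range u \<subseteq> range u" by auto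
  show ?case using i s by (simp only: funpow.simps)
qed

lemma periodic:
  assumes "(u::'a::finite\<Rightarrow>'a) ^^ a = u ^^ (a + p)" "a \<le> m"
  shows "u ^^ (m + k * p) = u ^^ m"
proof (induction k)
  case 0 then show ?case by simp
next
  case (Suc k)
  have e1: "m + Suc k * p = (m - a + k*p) + (a + p)" using assms(2) by simp
  have e2: "m + k * p = (m - a + k*p) + a" using assms(2) by simp
  have "u ^^ (m + Suc k * p) = u ^^ (m - a + k*p) \<circ> u ^^ (a + p)"
    unfolding e1 by (rule funpow_add)
  also have "\<dots> = u ^^ (m - a + k*p) \<circ> u ^^ a" using assms(1) by simp
  also have "\<dots> = u ^^ (m + k*p)" unfolding e2 by (rule funpow_add[symmetric])
  finally show ?case using Suc by simp
qed

theorem lemma11: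
  fixes f :: "'a::finite \<Rightarrow> 'a" and G :: "('a \<Rightarrow> 'a) set"
  assumes "perm_group G"
    and "\<exists>g\<in>G. rank (f \<circ> g \<circ> f) = rank f"
  shows "\<exists>e\<in>gen_semigroup (insert f G). idempotent e \<and> kernel e = kernel f"
proof -
  obtain g where gG: "g \<in> G" and r: "rank (f \<circ> g \<circ> f) = rank f" using assms(2) by blast
  have bg: "bij g" using assms(1) gG unfolding perm_group_def by blast
  hence ig: "inj g" by (simp add: bij_is_inj)
  have "range (f \<circ> g \<circ> f) = f ` (g ` range f)" by auto
  moreover have "card (g ` range f) = card (range f)" using ig by (simp add: card_image inj_on_subset)
  ultimately have "card (f ` (g ` range f)) = card (g ` range f)" using r unfolding rank_def by simp
  hence fi: "inj_on f (g ` range f)" by (simp add: eq_card_imp_inj_on)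
  define u where "u = g \<circ> f"
  have ru: "range u = g ` range f" unfolding u_def by auto
  have "inj_on (g \<circ> f) (g ` range f)"
    using fi ig by (meson comp_inj_on inj_on_subset subset_UNIV)
  hence iu: "inj_on u (range u)" unfolding ru unfolding u_def .
  have ug: "u \<in> gen_semigroup (insert f G)" unfolding u_def
    using gG by (meson gen_semigroup.base gen_semigroup.comp insertI1 insertI2)
  have "\<not> inj (\<lambda>i::nat. u ^^ i)"
  proof
    assume "inj (\<lambda>i::nat. u ^^ i)"
    hence "infinite (range (\<lambda>i::nat. u ^^ i))" using finite_imageD by blast
    thus False using finite[of "range (\<lambda>i::nat. u ^^ i)"] by blast
  qed
  then obtain a b where ab: "u ^^ a = u ^^ b" "a \<noteq> b" unfolding inj_def by blast
  obtain a p where ap: "u ^^ a = u ^^ (a + p)" "p > 0"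
  proof (cases "a < b")
    case True then show ?thesis using that[of a "b - a"] ab by simp
  next
    case False then show ?thesis using that[of b "a - b"] ab by simp
  qed
  define m where "m = Suc a * p"
  have am: "a \<le> m"
  proof -
    have "a * 1 \<le> a * p" using ap(2) by (intro mult_le_mono2) simp
    hence "a \<le> a * p" by (simp only: mult_1_right)
    hence "a \<le> p + a * p" by (rule trans_le_add2)
    thus ?thesis unfolding m_def by (simp only: mult_Suc)
  qed
  have m0: "m = Suc (m - 1)" using ap(2) unfolding m_def by simp
  define e where "e = u ^^ m"
  have idem: "idempotent e"
    unfolding idempotent_def e_def
    using periodic[OF ap(1) am, of "Suc a"] by (simp add: funpow_add[symmetric] m_def)
  have ke: "e x = e y \<longleftrightarrow> f x = f y" for x y
  proof -
    have "e = u ^^ (m - 1) \<circ> u" unfolding e_def by (subst m0) (simp only: funpow_Suc_right)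
    hence "e x = e y \<longleftrightarrow> u x = u y"
      using pow_inj[OF iu, of "m - 1"] by (auto dest: inj_onD)
    also have "\<dots> \<longleftrightarrow> f x = f y" unfolding u_def using ig by (auto dest: injD)
    finally show ?thesis .
  qed
  have "kernel e = kernel f" unfolding kernel_def using ke by simp
  moreover have "e \<in> gen_semigroup (insert f G)" unfolding e_def
    using pow_in_gen[OF ug, of "m - 1"] m0 by simp
  ultimately show ?thesis using idem by blast
qed

end
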